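(* Let $\mathcal{A}$ be an irreducible $n\times n$ znz-pattern with digraph $D(\mathcal{A})$, and let $\mathbb{F}=\mathbb{Z}_2$. (a) If $D(\mathcal{A})$ has an odd number of loops, then $\mathcal{A}$ is not potentially nilpotent over $\mathbb{Z}_2$. (b) If $D(\mathcal{A})$ has exactly two loops and exactly two $2$-cycles, then $\mathcal{A}$ is not potentially nilpotent over $\mathbb{Z}_2$.
   Context: A znz-pattern is a square matrix with entries in $\{*,0\}$; a realization over $\mathbb{F}$ is a matrix over $\mathbb{F}$ with nonzero entries exactly at the $*$ positions; potentially nilpotent over $\mathbb{F}$ means some realization is nilpotent. $D(\mathcal{A})$ has vertex set $\{1,\ldots,n\}$ and an arc $(i,j)$ when $\mathcal{A}_{i,j}=*$; loops are arcs $(i,i)$, and a $2$-cycle is a pair of distinct vertices $i,j$ with both arcs $(i,j)$ and $(j,i)$. Irreducible means $D(\mathcal{A})$ is strongly connected. *)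

theory Defs
  imports "HOL-Library.Z2" "Jordan_Normal_Form.Matrix"
begin

text \<open>An n x n znz-pattern is represented by a predicate P :: nat => nat => bool;
  P i j means entry (i,j) is a star (indices 0..n-1). Entries outside the
  index range are irrelevant.\<close>

definition realization :: "nat \<Rightarrow> (nat \<Rightarrow> nat \<Rightarrow> bool) \<Rightarrow> 'a::field mat \<Rightarrow> bool" where
  "realization n P M \<longleftrightarrow> M \<in> carrier_mat n n \<and>
     (\<forall>i<n. \<forall>j<n. (M $$ (i,j) \<noteq> 0 \<longleftrightarrow> P i j))"

definition potentially_nilpotent :: "'a::field itself \<Rightarrow> nat \<Rightarrow> (nat \<Rightarrow> nat \<Rightarrow> bool) \<Rightarrow> bool" where
  "potentially_nilpotent F n P \<longleftrightarrow>
     (\<exists>M :: 'a mat. realization n P M \<and> (\<exists>k. M ^\<^sub>m k = 0\<^sub>m n n))"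

definition arcs :: "nat \<Rightarrow> (nat \<Rightarrow> nat \<Rightarrow> bool) \<Rightarrow> (nat \<times> nat) set" where
  "arcs n P = {(i,j). i < n \<and> j < n \<and> P i j}"

definition irreducible_pattern :: "nat \<Rightarrow> (nat \<Rightarrow> nat \<Rightarrow> bool) \<Rightarrow> bool" where
  "irreducible_pattern n P \<longleftrightarrow> (\<forall>i<n. \<forall>j<n. (i,j) \<in> (arcs n P)\<^sup>*)"

definition num_loops :: "nat \<Rightarrow> (nat \<Rightarrow> nat \<Rightarrow> bool) \<Rightarrow> nat" where
  "num_loops n P = card {i. i < n \<and> P i i}"

definition num_2cycles :: "nat \<Rightarrow> (nat \<Rightarrow> nat \<Rightarrow> bool) \<Rightarrow> nat" where
  "num_2cycles n P = card {{i,j} | i j. i < n \<and> j < n \<and> i \<noteq> j \<and> P i j \<and> P j i}"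

end

theory Submission
  imports Defs
begin

declare add_bit_eq_xor[simp del] mult_bit_eq_and[simp del]

definition mmul :: "'i set \<Rightarrow> ('i \<Rightarrow> 'i \<Rightarrow> 'a::comm_ring_1) \<Rightarrow> ('i \<Rightarrow> 'i \<Rightarrow> 'a) \<Rightarrow> 'i \<Rightarrow> 'i \<Rightarrow> 'a" where
  "mmul I A B = (\<lambda>i j. \<Sum>k\<in>I. A i k * B k j)"

fun mpow :: "'i set \<Rightarrow> ('i \<Rightarrow> 'i \<Rightarrow> 'a::comm_ring_1) \<Rightarrow> nat \<Rightarrow> 'i \<Rightarrow> 'i \<Rightarrow> 'a" where
  "mpow I A 0 = (\<lambda>i j. if i = j then 1 else 0)"
| "mpow I A (Suc k) = mmul I (mpow I A k) A"

definition eqI :: "'i set \<Rightarrow> ('i \<Rightarrow> 'i \<Rightarrow> 'a) \<Rightarrow> ('i \<Rightarrow> 'i \<Rightarrow> 'a) \<Rightarrow> bool" where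
  "eqI I A B \<longleftrightarrow> (\<forall>i\<in>I. \<forall>j\<in>I. A i j = B i j)"

definition mtr :: "'i set \<Rightarrow> ('i \<Rightarrow> 'i \<Rightarrow> 'a::comm_ring_1) \<Rightarrow> 'a" where
  "mtr I A = (\<Sum>i\<in>I. A i i)"

lemma mmul_assoc:
  assumes "finite I"
  shows "mmul I (mmul I A B) C = mmul I A (mmul I B C)"
  unfolding mmul_def
proof (intro ext)
  fix i j
  have "(\<Sum>k\<in>I. (\<Sum>l\<in>I. A i l * B l k) * C k j) = (\<Sum>k\<in>I. \<Sum>l\<in>I. A i l * B l k * C k j)"
    by (simp add: sum_distrib_right)
  also have "\<dots> = (\<Sum>l\<in>I. \<Sum>k\<in>I. A i l * B l k * C k j)" by (rule sum.swap)
  also have "\<dots> = (\<Sum>l\<in>I. A i l * (\<Sum>k\<in>I. B l k * C k j))"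
    by (simp add: sum_distrib_left mult.assoc)
  finally show "(\<Sum>k\<in>I. (\<Sum>l\<in>I. A i l * B l k) * C k j) = (\<Sum>l\<in>I. A i l * (\<Sum>k\<in>I. B l k * C k j))" .
qed

lemma mmul_id_right:
  assumes "finite I" "j \<in> I"
  shows "mmul I A (mpow I B 0) i j = A i j"
  using assms by (simp add: mmul_def if_distrib[of "\<lambda>x. _ * x"] sum.delta' cong: if_cong)

lemma mpow_add:
  assumes "finite I" "i \<in> I" "j \<in> I"
  shows "mpow I A (a + b) i j = mmul I (mpow I A a) (mpow I A b) i j"
  using assms
proof (induction b arbitrary: j)
  case 0
  then show ?case using mmul_id_right[of I j "mpow I A a" A i] by simp
next
  case (Suc b)
  have "mpow I A (a + Suc b) i j = (\<Sum>k\<in>I. mpow I A (a+b) i k * A k j)"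
    by (simp add: mmul_def)
  also have "\<dots> = (\<Sum>k\<in>I. mmul I (mpow I A a) (mpow I A b) i k * A k j)"
    using Suc by (intro sum.cong) auto
  also have "\<dots> = mmul I (mmul I (mpow I A a) (mpow I A b)) A i j" by (simp add: mmul_def)
  also have "\<dots> = mmul I (mpow I A a) (mpow I A (Suc b)) i j"
    by (simp add: mmul_assoc[OF Suc.prems(1)])
  finally show ?case .
qed

lemma mpow_zero_later:
  assumes "finite I" "eqI I (mpow I A k) (\<lambda>_ _. 0)" "k \<le> m"
  shows "eqI I (mpow I A m) (\<lambda>_ _. 0)"
proof -
  obtain d where m: "m = k + d" using assms(3) le_Suc_ex by blast
  show ?thesis unfolding eqI_def
  proof (intro ballI)
    fix i j assume ij: "i \<in> I" "j \<in> I"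
    have "mpow I A m i j = (\<Sum>l\<in>I. mpow I A k i l * mpow I A d l j)"
      using mpow_add[OF assms(1) ij] m by (simp add: mmul_def)
    also have "\<dots> = 0" using assms(2) ij unfolding eqI_def by simp
    finally show "mpow I A m i j = 0" .
  qed
qed

lemma bit_add_self: "(x::bit) + x = 0" by (cases x) simp_all
lemma bit_mult_self: "(x::bit) * x = x" by (cases x) simp_all

lemma sum_sym_bit:
  assumes "finite I" "\<And>i k. f i k = f k i"
  shows "(\<Sum>i\<in>I. \<Sum>k\<in>I. (f i k :: bit)) = (\<Sum>i\<in>I. f i i)"
  using assms(1)
proof (induction I rule: finite_induct)
  case empty then show ?case by simp
next
  case (insert a I)
  have "(\<Sum>i\<in>insert a I. \<Sum>k\<in>insert a I. f i k)
     = f a a + (\<Sum>k\<in>I. f a k) + ((\<Sum>i\<in>I. f i a) + (\<Sum>i\<in>I. \<Sum>k\<in>I. f i k))"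
    using insert by (simp add: sum.distrib add.assoc)
  also have "(\<Sum>i\<in>I. f i a) = (\<Sum>k\<in>I. f a k)" using assms(2) by simp
  also have "f a a + (\<Sum>k\<in>I. f a k) + ((\<Sum>k\<in>I. f a k) + (\<Sum>i\<in>I. \<Sum>k\<in>I. f i k))
       = f a a + (\<Sum>i\<in>I. \<Sum>k\<in>I. f i k) + ((\<Sum>k\<in>I. f a k) + (\<Sum>k\<in>I. f a k))"
    by (simp only: ac_simps)
  also have "\<dots> = f a a + (\<Sum>i\<in>I. f i i)" using insert by (simp add: bit_add_self)
  finally show ?case using insert by simp
qed

lemma mtr_square_bit:
  assumes "finite I"
  shows "mtr I (mmul I A A) = (mtr I A :: bit)"
proof -
  have "mtr I (mmul I A A) = (\<Sum>i\<in>I. \<Sum>k\<in>I. A i k * A k i)" by (simp add: mtr_def mmul_def)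
  also have "\<dots> = (\<Sum>i\<in>I. A i i * A i i)" by (rule sum_sym_bit[OF assms]) (simp add: mult.commute)
  also have "\<dots> = (\<Sum>i\<in>I. \<Sum>k\<in>I. A i i * A k k)"
    by (rule sum_sym_bit[OF assms, symmetric]) (simp add: mult.commute)
  also have "\<dots> = (\<Sum>i\<in>I. A i i) * (\<Sum>k\<in>I. A k k)"
    by (simp add: sum_product)
  also have "\<dots> = mtr I A" by (simp add: mtr_def bit_mult_self del: mult_bit_eq_and)
  finally show ?thesis .
qed

lemma mpow_one_tr:
  assumes "finite I"
  shows "mtr I (mpow I A 1) = mtr I A"
  unfolding mtr_def
proof (intro sum.cong refl)
  fix i assume "i \<in> I"
  then show "mpow I A 1 i i = A i i" using assms
    by (simp add: mmul_def if_distrib[of "\<lambda>x. x * _"] sum.delta cong: if_cong)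
qed

lemma mtr_pow2:
  assumes "finite I"
  shows "mtr I (mpow I A (2^m)) = (mtr I A :: bit)"
proof (induction m)
  case 0 then show ?case using mpow_one_tr[OF assms] by simp
next
  case (Suc m)
  have "mtr I (mpow I A (2^Suc m)) = mtr I (mmul I (mpow I A (2^m)) (mpow I A (2^m)))"
    unfolding mtr_def
    by (intro sum.cong refl) (simp add: mpow_add[OF assms, symmetric] mult_2)
  also have "\<dots> = mtr I (mpow I A (2^m))" by (rule mtr_square_bit[OF assms])
  finally show ?case using Suc by simp
qed

lemma nilpotent_tr_bit:
  assumes "finite I" "eqI I (mpow I A k) (\<lambda>_ _. 0)"
  shows "mtr I A = (0::bit)"
proof -
  have "k \<le> 2^k" using less_exp[of k] by simp
  then have "eqI I (mpow I A (2^k)) (\<lambda>_ _. 0)" by (rule mpow_zero_later[OF assms])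
  then have "mtr I (mpow I A (2^k)) = 0" unfolding eqI_def mtr_def by simp
  then show ?thesis using mtr_pow2[OF assms(1)] by simp
qed

definition Pr :: "'i::linorder set \<Rightarrow> ('i \<times> 'i) set" where
  "Pr I = {(i,j). i \<in> I \<and> j \<in> I \<and> i < j}"

definition cmp :: "('i \<Rightarrow> 'i \<Rightarrow> 'a::comm_ring_1) \<Rightarrow> ('i \<times> 'i) \<Rightarrow> ('i \<times> 'i) \<Rightarrow> 'a" where
  "cmp A = (\<lambda>(i,j) (k,l). A i k * A j l - A i l * A j k)"

lemma finite_Pr: "finite I \<Longrightarrow> finite (Pr I)"
  by (rule finite_subset[of _ "I \<times> I"]) (auto simp: Pr_def)

lemma sum_square_split:
  fixes I :: "'i::linorder set"
  assumes "finite I"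
  shows "(\<Sum>k\<in>I. \<Sum>l\<in>I. h k l) = (\<Sum>(k,l)\<in>Pr I. h k l + h l k) + (\<Sum>k\<in>I. (h k k :: 'a::comm_ring_1))"
proof -
  let ?S = "Pr I" and ?T = "(\<lambda>(k,l). (l,k)) ` Pr I" and ?D = "(\<lambda>k. (k,k)) ` I"
  have fin: "finite ?S" "finite ?T" "finite ?D" using finite_Pr[OF assms] assms by auto
  have eq: "I \<times> I = ?S \<union> ?T \<union> ?D"
    by (auto simp: Pr_def image_iff)
  have d1: "?S \<inter> ?T = {}" by (auto simp: Pr_def)
  have d2: "(?S \<union> ?T) \<inter> ?D = {}" by (auto simp: Pr_def)
  have "(\<Sum>k\<in>I. \<Sum>l\<in>I. h k l) = (\<Sum>(k,l)\<in>I \<times> I. h k l)"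
    by (rule sum.cartesian_product)
  also have "\<dots> = (\<Sum>(k,l)\<in>?S. h k l) + (\<Sum>(k,l)\<in>?T. h k l) + (\<Sum>(k,l)\<in>?D. h k l)"
    unfolding eq using fin d1 d2 by (simp add: sum.union_disjoint)
  also have "(\<Sum>(k,l)\<in>?T. h k l) = (\<Sum>(k,l)\<in>?S. h l k)"
    by (subst sum.reindex) (auto simp: inj_on_def case_prod_beta)
  also have "(\<Sum>(k,l)\<in>?D. h k l) = (\<Sum>k\<in>I. h k k)"
    by (subst sum.reindex) (auto simp: inj_on_def)
  finally show ?thesis by (simp add: sum.distrib case_prod_beta)
qed

lemma cauchy_binet2:
  fixes I :: "'i::linorder set" and A B :: "'i \<Rightarrow> 'i \<Rightarrow> 'a::comm_ring_1"
  assumes "finite I"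
  shows "mmul (Pr I) (cmp A) (cmp B) p q = cmp (mmul I A B) p q"
proof -
  obtain i j r s where pq: "p = (i,j)" "q = (r,s)" by fastforce
  define D where "D k l = B k r * B l s - B k s * B l r" for k l
  have "cmp (mmul I A B) p q
     = (\<Sum>k\<in>I. A i k * B k r) * (\<Sum>l\<in>I. A j l * B l s) - (\<Sum>k\<in>I. A i k * B k s) * (\<Sum>l\<in>I. A j l * B l r)"
    by (simp add: cmp_def mmul_def pq)
  also have "\<dots> = (\<Sum>k\<in>I. \<Sum>l\<in>I. A i k * A j l * D k l)"
    by (simp add: sum_product D_def sum_subtractf[symmetric] algebra_simps)
  also have "\<dots> = (\<Sum>(k,l)\<in>Pr I. A i k * A j l * D k l + A i l * A j k * D l k) + (\<Sum>k\<in>I. A i k * A j k * D k k)"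
    by (rule sum_square_split[OF assms])
  also have "(\<Sum>k\<in>I. A i k * A j k * D k k) = 0" by (simp add: D_def mult.commute)
  also have "(\<Sum>(k,l)\<in>Pr I. A i k * A j l * D k l + A i l * A j k * D l k)
     = (\<Sum>(k,l)\<in>Pr I. cmp A (i,j) (k,l) * cmp B (k,l) (r,s))"
    by (intro sum.cong refl) (auto simp: cmp_def D_def algebra_simps)
  also have "\<dots> = mmul (Pr I) (cmp A) (cmp B) p q"
    by (simp add: mmul_def pq case_prod_beta)
  finally show ?thesis by simp
qed

lemma cmp_pow:
  fixes I :: "'i::linorder set" and A :: "'i \<Rightarrow> 'i \<Rightarrow> 'a::comm_ring_1"
  assumes "finite I"
  shows "eqI (Pr I) (mpow (Pr I) (cmp A) k) (cmp (mpow I A k))"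
proof (induction k)
  case 0
  show ?case unfolding eqI_def by (auto simp: Pr_def cmp_def)
next
  case (Suc k)
  show ?case unfolding eqI_def
  proof (intro ballI)
    fix p q assume pq: "p \<in> Pr I" "q \<in> Pr I"
    have "mpow (Pr I) (cmp A) (Suc k) p q = (\<Sum>r\<in>Pr I. mpow (Pr I) (cmp A) k p r * cmp A r q)"
      by (simp add: mmul_def)
    also have "\<dots> = (\<Sum>r\<in>Pr I. cmp (mpow I A k) p r * cmp A r q)"
      using Suc pq unfolding eqI_def by (intro sum.cong) auto
    also have "\<dots> = mmul (Pr I) (cmp (mpow I A k)) (cmp A) p q" by (simp add: mmul_def)
    also have "\<dots> = cmp (mpow I A (Suc k)) p q" by (simp add: cauchy_binet2[OF assms])
    finally show "mpow (Pr I) (cmp A) (Suc k) p q = cmp (mpow I A (Suc k)) p q" .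
  qed
qed

lemma cmp_zero:
  assumes "eqI I X (\<lambda>_ _. 0)"
  shows "eqI (Pr I) (cmp X) (\<lambda>_ _. 0)"
  using assms unfolding eqI_def Pr_def cmp_def by auto

lemma cmp_nilpotent_tr:
  fixes I :: "'i::linorder set" and A :: "'i \<Rightarrow> 'i \<Rightarrow> bit"
  assumes "finite I" "eqI I (mpow I A k) (\<lambda>_ _. 0)"
  shows "mtr (Pr I) (cmp A) = 0"
proof -
  have "eqI (Pr I) (mpow (Pr I) (cmp A) k) (\<lambda>_ _. 0)"
    using cmp_pow[OF assms(1), of A k] cmp_zero[OF assms(2)] unfolding eqI_def by simp
  then show ?thesis by (rule nilpotent_tr_bit[OF finite_Pr[OF assms(1)]])
qed

lemma jnf_pow:
  assumes "M \<in> carrier_mat n n" "i < n" "j < n"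
  shows "(M ^\<^sub>m k) $$ (i,j) = mpow {..<n} (\<lambda>a b. M $$ (a,b)) k i j"
  using assms(2,3)
proof (induction k arbitrary: i j)
  case 0 then show ?case using assms(1) by simp
next
  case (Suc k)
  have "(M ^\<^sub>m Suc k) $$ (i,j) = (\<Sum>l\<in>{0..<n}. (M ^\<^sub>m k) $$ (i,l) * M $$ (l,j))"
    using Suc.prems assms(1) by (simp add: scalar_prod_def)
  also have "\<dots> = (\<Sum>l\<in>{..<n}. mpow {..<n} (\<lambda>a b. M $$ (a,b)) k i l * M $$ (l,j))"
    using Suc by (intro sum.cong) auto
  finally show ?case by (simp add: mmul_def)
qed

lemma of_nat_bit: "(of_nat m :: bit) = (if even m then 0 else 1)"
  by (induction m) (auto simp: bit_add_self)

theorem lemma5p2: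
  fixes n :: nat and P :: "nat \<Rightarrow> nat \<Rightarrow> bool"
  assumes "irreducible_pattern n P"
  shows "(odd (num_loops n P) \<longrightarrow> \<not> potentially_nilpotent TYPE(bit) n P)
       \<and> (num_loops n P = 2 \<and> num_2cycles n P = 2 \<longrightarrow> \<not> potentially_nilpotent TYPE(bit) n P)"
proof -
  have main: "mtr {..<n} (\<lambda>a b. of_bool (P a b) :: bit) = 0 \<and>
      mtr (Pr {..<n}) (cmp (\<lambda>a b. of_bool (P a b) :: bit)) = 0"
    if pn: "potentially_nilpotent TYPE(bit) n P"
  proof -
    obtain M :: "bit mat" and k where M: "realization n P M" "M ^\<^sub>m k = 0\<^sub>m n n"
      using pn unfolding potentially_nilpotent_def by blast
    have car: "M \<in> carrier_mat n n" using M(1) by (simp add: realization_def)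
    let ?A = "\<lambda>a b. M $$ (a,b)"
    have nil: "eqI {..<n} (mpow {..<n} ?A k) (\<lambda>_ _. 0)"
      unfolding eqI_def using jnf_pow[OF car] M(2) by (metis index_zero_mat(1) lessThan_iff)
    have Aeq: "eqI {..<n} ?A (\<lambda>a b. of_bool (P a b))"
      using M(1) unfolding eqI_def realization_def
      by (metis (full_types) bit_not_zero_iff lessThan_iff of_bool_eq(1) of_bool_eq(2))
    have t1: "mtr {..<n} ?A = 0" by (rule nilpotent_tr_bit[OF _ nil]) simp
    have t2: "mtr (Pr {..<n}) (cmp ?A) = 0" by (rule cmp_nilpotent_tr[OF _ nil]) simp
    have "mtr {..<n} ?A = mtr {..<n} (\<lambda>a b. of_bool (P a b) :: bit)"
      using Aeq unfolding eqI_def mtr_def by (intro sum.cong) auto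
    moreover have "mtr (Pr {..<n}) (cmp ?A) = mtr (Pr {..<n}) (cmp (\<lambda>a b. of_bool (P a b) :: bit))"
      using Aeq unfolding eqI_def mtr_def cmp_def Pr_def by (intro sum.cong) auto
    ultimately show ?thesis using t1 t2 by simp
  qed
  define Q1 where "Q1 = (\<lambda>p::nat\<times>nat. P (fst p) (fst p) \<and> P (snd p) (snd p))"
  define Q2 where "Q2 = (\<lambda>p::nat\<times>nat. P (fst p) (snd p) \<and> P (snd p) (fst p))"
  have fP: "finite (Pr {..<n})" by (rule finite_Pr) simp
  have "{..<n} \<inter> {x. P x x} = {i. i<n \<and> P i i}" by auto
  then have loopsum: "mtr {..<n} (\<lambda>a b. of_bool (P a b) :: bit) = of_nat (num_loops n P)"
    unfolding mtr_def num_loops_def by simp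
  have "mtr (Pr {..<n}) (cmp (\<lambda>a b. of_bool (P a b) :: bit))
      = (\<Sum>p\<in>Pr {..<n}. of_bool (Q1 p) + of_bool (Q2 p))"
    unfolding mtr_def cmp_def Q1_def Q2_def
    by (intro sum.cong refl) (auto simp: case_prod_beta)
  also have "\<dots> = of_nat (card (Pr {..<n} \<inter> {p. Q1 p})) + of_nat (card (Pr {..<n} \<inter> {p. Q2 p}))"
    using fP by (simp add: sum.distrib)
  finally have cmpsum: "mtr (Pr {..<n}) (cmp (\<lambda>a b. of_bool (P a b) :: bit))
      = of_nat (card (Pr {..<n} \<inter> {p. Q1 p})) + of_nat (card (Pr {..<n} \<inter> {p. Q2 p}))" .
  have card2: "card (Pr {..<n} \<inter> {p. Q2 p}) = num_2cycles n P"
  proof -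
    have inj: "inj_on (\<lambda>(i,j). {i,j}) (Pr {..<n} \<inter> {p. Q2 p})"
      unfolding inj_on_def Pr_def by (auto simp: doubleton_eq_iff)
    have img: "(\<lambda>(i,j). {i,j}) ` (Pr {..<n} \<inter> {p. Q2 p})
        = {{i,j} | i j. i < n \<and> j < n \<and> i \<noteq> j \<and> P i j \<and> P j i}"
    proof (intro equalityI subsetI)
      fix x assume "x \<in> (\<lambda>(i,j). {i,j}) ` (Pr {..<n} \<inter> {p. Q2 p})"
      then obtain p where p: "p \<in> Pr {..<n} \<inter> {p. Q2 p}" "x = (\<lambda>(i,j). {i,j}) p"
        by (rule imageE)
      obtain i j where pij: "p = (i,j)" by (cases p)
      have h: "x = {i,j}" "i < j" "j < n" "P i j" "P j i"
        using p unfolding pij Pr_def Q2_def by simp_all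
      then have "i < n" "i \<noteq> j" by auto
      with h have "x = {i,j} \<and> i < n \<and> j < n \<and> i \<noteq> j \<and> P i j \<and> P j i" by simp
      then show "x \<in> {{i,j} | i j. i < n \<and> j < n \<and> i \<noteq> j \<and> P i j \<and> P j i}"
        unfolding mem_Collect_eq
        apply -
        apply (rule exI[where P="\<lambda>a. \<exists>b. x = {a,b} \<and> a < n \<and> b < n \<and> a \<noteq> b \<and> P a b \<and> P b a" and x=i])
        apply (rule exI[where P="\<lambda>b. x = {i,b} \<and> i < n \<and> b < n \<and> i \<noteq> b \<and> P i b \<and> P b i" and x=j])
        apply (erule asm_rl)
        done
    next
      fix x assume "x \<in> {{i,j} | i j. i < n \<and> j < n \<and> i \<noteq> j \<and> P i j \<and> P j i}"
      then obtain i j where x: "x = {i,j}" "i < n" "j < n" "i \<noteq> j" "P i j" "P j i" by blast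
      show "x \<in> (\<lambda>(i,j). {i,j}) ` (Pr {..<n} \<inter> {p. Q2 p})"
      proof (cases "i < j")
        case True
        then show ?thesis using x unfolding Pr_def Q2_def by (auto intro!: image_eqI[of _ _ "(i,j)"])
      next
        case False
        then have "j < i" using x(4) by simp
        then show ?thesis using x unfolding Pr_def Q2_def
          by (auto intro!: image_eqI[of _ _ "(j,i)"])
      qed
    qed
    show ?thesis unfolding num_2cycles_def using card_image[OF inj] img by simp
  qed
  have card1: "card (Pr {..<n} \<inter> {p. Q1 p}) = 1" if "num_loops n P = 2"
  proof -
    have "card {i. i<n \<and> P i i} = 2" using that unfolding num_loops_def .
    then obtain a b where ab: "{i. i<n \<and> P i i} = {a,b}" "a \<noteq> b"
      unfolding card_2_iff by blast
    have li: "(i < n \<and> P i i) \<longleftrightarrow> (i = a \<or> i = b)" for i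
    proof -
      have "i \<in> {i. i<n \<and> P i i} \<longleftrightarrow> i \<in> {a,b}" by (simp only: ab(1))
      then show ?thesis by simp
    qed
    have ha: "a < n" "P a a" "b < n" "P b b" using li[of a] li[of b] by simp_all
    have "Pr {..<n} \<inter> {p. Q1 p} = {(min a b, max a b)}"
    proof (intro equalityI subsetI)
      fix p assume "p \<in> Pr {..<n} \<inter> {p. Q1 p}"
      moreover obtain i j where pij: "p = (i,j)" by (cases p)
      ultimately have "i < j" "j < n" "P i i" "P j j" unfolding Pr_def Q1_def by simp_all
      then have "i = a \<or> i = b" "j = a \<or> j = b" using li[of i] li[of j] by simp_all
      with \<open>i < j\<close> have "i = min a b" "j = max a b" by (auto simp: min_def max_def)
      then show "p \<in> {(min a b, max a b)}" using pij by simp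
    next
      fix p assume "p \<in> {(min a b, max a b)}"
      then have "p = (min a b, max a b)" by simp
      then show "p \<in> Pr {..<n} \<inter> {p. Q1 p}" using ha ab(2) unfolding Pr_def Q1_def
        by (simp add: min_def max_def)
    qed
    then show ?thesis by simp
  qed
  show ?thesis
  proof (intro conjI impI notI)
    assume h: "odd (num_loops n P)" "potentially_nilpotent TYPE(bit) n P"
    have "mtr {..<n} (\<lambda>a b. of_bool (P a b) :: bit) = 0" using main[OF h(2)] by (rule conjunct1)
    then show False using loopsum of_nat_bit[of "num_loops n P"] h(1) by simp
  next
    assume h: "num_loops n P = 2 \<and> num_2cycles n P = 2" "potentially_nilpotent TYPE(bit) n P"
    have "mtr (Pr {..<n}) (cmp (\<lambda>a b. of_bool (P a b) :: bit)) = 0" using main[OF h(2)] by (rule conjunct2)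
    then have "(of_nat 1 + of_nat 2 :: bit) = 0" using cmpsum card1 card2 h(1) by simp
    then show False by simp
  qed
qed

end
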